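(* Let $G=(V,E,w)$ be a weighted graph with graph distance $d_G$, let $\mathcal{U}\subseteq V$ be a patch with injective coordinate map $\phi\colon\mathcal{U}\to\mathbb{R}^q$, let $v_0\in\mathcal{U}$, $\gamma\ge 0$ and $C>0$, and let $f\colon V\to\mathbb{R}$ satisfy $f\in C^\gamma_G(C,v_0)$ (defined below). Let $\tau\subseteq\mathcal{U}$ be a cluster with $v_0\in\tau$, and let $\psi_{j,k}$ be a samplet associated with $\tau$, i.e. $\psi_{j,k}=\sum_{\ell=1}^{|\tau|}\omega_{j,k}^{(\ell)}\delta_{\phi(v_\ell)}$, where $\tau=\{v_1,\dots,v_{|\tau|}\}$, with real weights satisfying $\sum_{\ell=1}^{|\tau|}(\omega_{j,k}^{(\ell)})^2=1$ and having vanishing moments up to order $\lfloor\gamma\rfloor$, i.e. $\sum_{\ell=1}^{|\tau|}\omega_{j,k}^{(\ell)}\,\phi(v_\ell)^{\boldsymbol\alpha}=0$ for every multi-index $\boldsymbol\alpha\in\mathbb{N}_0^q$ with $|\boldsymbol\alpha|\le\lfloor\gamma\rfloor$. Then \[ |\langle \psi_{j,k},f\circ\phi^{-1}\rangle|\le C \max_{v\in\mathcal{U}} d_G(v,v_0)^\gamma \sqrt{|\tau|}, \] where $\langle \psi_{j,k},g\rangle:=\sum_{\ell=1}^{|\tau|}\omega_{j,k}^{(\ell)}g(\phi(v_\ell))$.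
   Context: $G=(V,E,w)$ is a weighted graph with finite vertex set $V$, edge set $E$ and nonnegative edge weights $w$; $d_G$ denotes the graph (shortest weighted path) distance. The vertex set is partitioned into patches, each patch $\mathcal{U}$ being equipped with a unique chart, i.e. an injective coordinate map $\phi\colon\mathcal{U}\to\mathbb{R}^q$. For $\mathbf{x}\in\mathbb{R}^q$ and a multi-index $\boldsymbol\beta$, $\mathbf{x}^{\boldsymbol\beta}=\prod_i x_i^{\beta_i}$. Definition of the class: for $v_0\in\mathcal{U}$ (with $(\mathcal{U},\phi)$ the chart containing $v_0$), $\gamma\ge0$, $C>0$, a function $f\colon V\to\mathbb{R}$ belongs to $C^\gamma_G(C,v_0)$ if there exist real coefficients $(c_{\boldsymbol\beta})_{|\boldsymbol\beta|\le\lfloor\gamma\rfloor}$ with $\sum_{|\boldsymbol\beta|=\lfloor\gamma\rfloor}|c_{\boldsymbol\beta}|\neq 0$ such that \[ \Big|f(v)-\sum_{|\boldsymbol\beta|\le\lfloor\gamma\rfloor}c_{\boldsymbol\beta}\big(\phi(v)-\phi(v_0)\big)^{\boldsymbol\beta}\Big|\le C\, d_G(v,v_0)^\gamma\quad\text{for every } v\in\mathcal{U}. \] A cluster is a subset of the patch $\mathcal{U}$ (a node of a hierarchical cluster tree on $\phi(\mathcal{U})$); $\delta_{\mathbf{z}}$ denotes the Dirac measure at $\mathbf{z}\in\mathbb{R}^q$. *)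

theory Defs
  imports "HOL-Analysis.Analysis"
begin

definition weighted_graph :: "'v set \<Rightarrow> 'v set set \<Rightarrow> ('v set \<Rightarrow> real) \<Rightarrow> bool" where
  "weighted_graph V E w \<longleftrightarrow> finite V \<and> (\<forall>e\<in>E. \<exists>a b. a \<in> V \<and> b \<in> V \<and> a \<noteq> b \<and> e = {a, b})
     \<and> (\<forall>e\<in>E. 0 \<le> w e)"

fun is_walk :: "'v set set \<Rightarrow> 'v list \<Rightarrow> bool" where
  "is_walk E [] = False"
| "is_walk E [x] = True"
| "is_walk E (x # y # xs) = ({x, y} \<in> E \<and> is_walk E (y # xs))"

fun walk_weight :: "('v set \<Rightarrow> real) \<Rightarrow> 'v list \<Rightarrow> real" where
  "walk_weight w (x # y # xs) = w {x, y} + walk_weight w (y # xs)"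
| "walk_weight w _ = 0"

definition graph_connected :: "'v set \<Rightarrow> 'v set set \<Rightarrow> bool" where
  "graph_connected V E \<longleftrightarrow> (\<forall>u\<in>V. \<forall>v\<in>V. \<exists>xs. is_walk E xs \<and> hd xs = u \<and> last xs = v)"

definition graph_dist :: "'v set set \<Rightarrow> ('v set \<Rightarrow> real) \<Rightarrow> 'v \<Rightarrow> 'v \<Rightarrow> real" where
  "graph_dist E w u v = Inf {walk_weight w xs | xs. is_walk E xs \<and> hd xs = u \<and> last xs = v}"

text \<open>Real power with the convention 0^0 = 1 (Isabelle's powr has 0 powr 0 = 0).\<close>
definition rpow :: "real \<Rightarrow> real \<Rightarrow> real" where
  "rpow x g = (if x = 0 then (if g = 0 then 1 else 0) else x powr g)"

definition mi_order :: "('q::finite \<Rightarrow> nat) \<Rightarrow> nat" where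
  "mi_order \<beta> = (\<Sum>i\<in>UNIV. \<beta> i)"

definition monom_pow :: "real^'q::finite \<Rightarrow> ('q \<Rightarrow> nat) \<Rightarrow> real" where
  "monom_pow x \<beta> = (\<Prod>i\<in>UNIV. (x $ i) ^ (\<beta> i))"

definition holder_class ::
  "'v set set \<Rightarrow> ('v set \<Rightarrow> real) \<Rightarrow> 'v set \<Rightarrow> ('v \<Rightarrow> real^'q::finite) \<Rightarrow> 'v \<Rightarrow> real \<Rightarrow> real \<Rightarrow> ('v \<Rightarrow> real) \<Rightarrow> bool" where
  "holder_class E w U \<phi> v0 \<gamma> C f \<longleftrightarrow>
     (\<exists>c :: ('q \<Rightarrow> nat) \<Rightarrow> real.
        (\<Sum>\<beta>\<in>{\<beta>. mi_order \<beta> = nat \<lfloor>\<gamma>\<rfloor>}. \<bar>c \<beta>\<bar>) \<noteq> 0 \<and>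
        (\<forall>v\<in>U. \<bar>f v - (\<Sum>\<beta>\<in>{\<beta>. mi_order \<beta> \<le> nat \<lfloor>\<gamma>\<rfloor>}. c \<beta> * monom_pow (\<phi> v - \<phi> v0) \<beta>)\<bar>
                 \<le> C * rpow (graph_dist E w v v0) \<gamma>))"

end

theory Submission
  imports Defs
begin

lemma monom_shift:
  fixes x y :: "real^'q::finite"
  shows "monom_pow (x - y) \<beta> = (\<Sum>g\<in>PiE UNIV (\<lambda>i. {..\<beta> i}).
      (\<Prod>i\<in>UNIV. of_nat (\<beta> i choose g i) * (-(y$i))^(\<beta> i - g i)) * monom_pow x g)"
proof -
  have "monom_pow (x-y) \<beta> = (\<Prod>i\<in>UNIV. \<Sum>k\<le>\<beta> i. of_nat (\<beta> i choose k) * (x$i)^k * (-(y$i))^(\<beta> i - k))"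
    unfolding monom_pow_def
  proof (rule prod.cong)
    fix i
    have "(x - y) $ i = x$i + (-(y$i))" by simp
    then show "((x - y) $ i) ^ \<beta> i = (\<Sum>k\<le>\<beta> i. of_nat (\<beta> i choose k) * (x$i)^k * (-(y$i))^(\<beta> i - k))"
      by (simp only: binomial_ring)
  qed simp
  also have "\<dots> = (\<Sum>g\<in>PiE UNIV (\<lambda>i. {..\<beta> i}). \<Prod>i\<in>UNIV. of_nat (\<beta> i choose g i) * (x$i)^(g i) * (-(y$i))^(\<beta> i - g i))"
    by (rule prod_sum_PiE) auto
  also have "\<dots> = (\<Sum>g\<in>PiE UNIV (\<lambda>i. {..\<beta> i}).
      (\<Prod>i\<in>UNIV. of_nat (\<beta> i choose g i) * (-(y$i))^(\<beta> i - g i)) * monom_pow x g)"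
    unfolding monom_pow_def
    by (rule sum.cong) (simp_all add: prod.distrib[symmetric] mult_ac)
  finally show ?thesis .
qed

lemma order_le:
  fixes \<beta> :: "'q::finite \<Rightarrow> nat"
  assumes "g \<in> PiE UNIV (\<lambda>i. {..\<beta> i})"
  shows "mi_order g \<le> mi_order \<beta>"
  unfolding mi_order_def using assms by (intro sum_mono) auto

lemma rpow_nonneg: "rpow x g \<ge> 0"
  unfolding rpow_def by auto

theorem proposition4p1:
  fixes V :: "'v set" and E :: "'v set set" and w :: "'v set \<Rightarrow> real"
    and U \<tau> :: "'v set" and \<phi> :: "'v \<Rightarrow> real^'q::finite" and v0 :: 'v
    and \<gamma> C :: real and f :: "'v \<Rightarrow> real" and \<omega> :: "'v \<Rightarrow> real"
  assumes G: "weighted_graph V E w"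
    and conn: "graph_connected V E"
    and U: "U \<subseteq> V" and inj: "inj_on \<phi> U"
    and v0: "v0 \<in> U" and \<gamma>: "\<gamma> \<ge> 0" and C: "C > 0"
    and f: "holder_class E w U \<phi> v0 \<gamma> C f"
    and \<tau>: "\<tau> \<subseteq> U" and v0\<tau>: "v0 \<in> \<tau>"
    and norm: "(\<Sum>v\<in>\<tau>. (\<omega> v)\<^sup>2) = 1"
    and moments: "\<And>\<alpha>. mi_order \<alpha> \<le> nat \<lfloor>\<gamma>\<rfloor> \<Longrightarrow> (\<Sum>v\<in>\<tau>. \<omega> v * monom_pow (\<phi> v) \<alpha>) = 0"
  shows "\<bar>\<Sum>v\<in>\<tau>. \<omega> v * f (inv_into U \<phi> (\<phi> v))\<bar>
           \<le> C * (MAX v\<in>U. rpow (graph_dist E w v v0) \<gamma>) * sqrt (real (card \<tau>))"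
proof -
  define n where "n = nat \<lfloor>\<gamma>\<rfloor>"
  define d where "d v = rpow (graph_dist E w v v0) \<gamma>" for v
  define M where "M = (MAX v\<in>U. d v)"
  have finU: "finite U" using G U unfolding weighted_graph_def by (auto intro: finite_subset)
  have fin\<tau>: "finite \<tau>" using finU \<tau> by (rule finite_subset[rotated])
  have dM: "d v \<le> M" if "v \<in> U" for v unfolding M_def using finU that by simp
  have M0: "0 \<le> M" using dM[OF v0] rpow_nonneg[of _ \<gamma>] unfolding d_def by (meson order_trans)
  obtain c where c: "\<And>v. v \<in> U \<Longrightarrow> \<bar>f v - (\<Sum>\<beta>\<in>{\<beta>. mi_order \<beta> \<le> n}. c \<beta> * monom_pow (\<phi> v - \<phi> v0) \<beta>)\<bar> \<le> C * d v"
    using f unfolding holder_class_def n_def d_def by blast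
  define P where "P v = (\<Sum>\<beta>\<in>{\<beta>. mi_order \<beta> \<le> n}. c \<beta> * monom_pow (\<phi> v - \<phi> v0) \<beta>)" for v
  have mom0: "(\<Sum>v\<in>\<tau>. \<omega> v * monom_pow (\<phi> v - \<phi> v0) \<beta>) = 0" if "mi_order \<beta> \<le> n" for \<beta>
  proof -
    have "(\<Sum>v\<in>\<tau>. \<omega> v * monom_pow (\<phi> v - \<phi> v0) \<beta>)
       = (\<Sum>v\<in>\<tau>. \<Sum>g\<in>PiE UNIV (\<lambda>i. {..\<beta> i}). (\<Prod>i\<in>UNIV. of_nat (\<beta> i choose g i) * (-(\<phi> v0$i))^(\<beta> i - g i)) * (\<omega> v * monom_pow (\<phi> v) g))"
      by (simp add: monom_shift sum_distrib_left mult_ac)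
    also have "\<dots> = (\<Sum>g\<in>PiE UNIV (\<lambda>i. {..\<beta> i}). (\<Prod>i\<in>UNIV. of_nat (\<beta> i choose g i) * (-(\<phi> v0$i))^(\<beta> i - g i)) * (\<Sum>v\<in>\<tau>. \<omega> v * monom_pow (\<phi> v) g))"
      by (simp add: sum.swap[of _ \<tau>] sum_distrib_left)
    also have "\<dots> = 0"
    proof (rule sum.neutral, rule ballI)
      fix g assume "g \<in> PiE UNIV (\<lambda>i. {..\<beta> i})"
      then have "mi_order g \<le> n" using order_le[of g \<beta>] that by linarith
      then show "(\<Prod>i\<in>UNIV. of_nat (\<beta> i choose g i) * (-(\<phi> v0$i))^(\<beta> i - g i)) * (\<Sum>v\<in>\<tau>. \<omega> v * monom_pow (\<phi> v) g) = 0"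
        using moments n_def by simp
    qed
    finally show ?thesis .
  qed
  have Pzero: "(\<Sum>v\<in>\<tau>. \<omega> v * P v) = 0"
  proof -
    have "(\<Sum>v\<in>\<tau>. \<omega> v * P v) = (\<Sum>v\<in>\<tau>. \<Sum>\<beta>\<in>{\<beta>. mi_order \<beta> \<le> n}. c \<beta> * (\<omega> v * monom_pow (\<phi> v - \<phi> v0) \<beta>))"
      unfolding P_def by (simp add: sum_distrib_left mult_ac)
    also have "\<dots> = (\<Sum>\<beta>\<in>{\<beta>. mi_order \<beta> \<le> n}. c \<beta> * (\<Sum>v\<in>\<tau>. \<omega> v * monom_pow (\<phi> v - \<phi> v0) \<beta>))"
      by (simp add: sum.swap[of _ \<tau>] sum_distrib_left)
    also have "\<dots> = 0" by (simp add: mom0)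
    finally show ?thesis .
  qed
  have inv: "inv_into U \<phi> (\<phi> v) = v" if "v \<in> \<tau>" for v using inj \<tau> that by auto
  have "(\<Sum>v\<in>\<tau>. \<omega> v * f (inv_into U \<phi> (\<phi> v))) = (\<Sum>v\<in>\<tau>. \<omega> v * (f v - P v))"
    using Pzero by (simp add: inv right_diff_distrib sum_subtractf)
  then have "\<bar>\<Sum>v\<in>\<tau>. \<omega> v * f (inv_into U \<phi> (\<phi> v))\<bar> \<le> (\<Sum>v\<in>\<tau>. \<bar>\<omega> v\<bar> * \<bar>f v - P v\<bar>)"
    by (metis (no_types, lifting) abs_mult sum.cong sum_abs)
  also have "\<dots> \<le> (\<Sum>v\<in>\<tau>. \<bar>\<omega> v\<bar> * (C * M))"
  proof (rule sum_mono)
    fix v assume v: "v \<in> \<tau>"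
    then have "\<bar>f v - P v\<bar> \<le> C * M" using c[of v] dM[of v] \<tau> C unfolding P_def
      by (smt (verit, ccfv_threshold) mult_left_mono subsetD)
    then show "\<bar>\<omega> v\<bar> * \<bar>f v - P v\<bar> \<le> \<bar>\<omega> v\<bar> * (C * M)" by (simp add: mult_left_mono)
  qed
  also have "\<dots> = C * M * (\<Sum>v\<in>\<tau>. \<bar>\<omega> v\<bar> * \<bar>1\<bar>)" by (simp add: sum_distrib_left mult_ac)
  also have "\<dots> \<le> C * M * sqrt (real (card \<tau>))"
  proof -
    have "(\<Sum>v\<in>\<tau>. \<bar>\<omega> v\<bar> * \<bar>1\<bar>) \<le> L2_set \<omega> \<tau> * L2_set (\<lambda>_. 1) \<tau>" by (rule L2_set_mult_ineq)
    also have "\<dots> = sqrt (real (card \<tau>))" unfolding L2_set_def norm by simp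
    finally show ?thesis using C M0 by (simp add: mult_left_mono)
  qed
  finally show ?thesis unfolding M_def d_def .
qed

end
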